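(* For every band operator $A$ on $\ell^2(\mathbb{Z})$ and every $\varepsilon>0$ there are $l,r\in\mathbb{Z}$ such that $\nu(A)\le\nu_{l..r}(A)<\nu(A)+\varepsilon$.
   Context: A band operator on $\ell^2(\mathbb{Z})$ is a finite sum $\sum_{k=-w}^{w}M_{a^{(k)}}S^k$ with $a^{(k)}\in\ell^\infty(\mathbb{Z})$, $(Sx)_n=x_{n-1}$, $(M_ax)_n=a_nx_n$. $\nu(A):=\inf\{\|Ax\|:\|x\|=1\}$; for $l..r:=\{n\in\mathbb{Z}:l\le n\le r\}$, $\nu_{l..r}(A):=\inf\{\|Ax\|:\operatorname{supp}x\subseteq l..r,\ \|x\|=1\}$. *)

theory Defs
  imports "HOL-Analysis.Analysis"
begin

definition l2 :: "(int \<Rightarrow> complex) set" where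
  "l2 = {x. (\<lambda>n. (cmod (x n))\<^sup>2) summable_on UNIV}"

definition l2norm :: "(int \<Rightarrow> complex) \<Rightarrow> real" where
  "l2norm x = sqrt (\<Sum>\<^sub>\<infinity>n. (cmod (x n))\<^sup>2)"

text \<open>Shift: (S x)_n = x_(n-1), so (S^k x)_n = x_(n-k); multiplication (M_a x)_n = a_n x_n.\<close>
definition shift_pow :: "int \<Rightarrow> (int \<Rightarrow> complex) \<Rightarrow> (int \<Rightarrow> complex)" where
  "shift_pow k x = (\<lambda>n. x (n - k))"

definition mult_op :: "(int \<Rightarrow> complex) \<Rightarrow> (int \<Rightarrow> complex) \<Rightarrow> (int \<Rightarrow> complex)" where
  "mult_op a x = (\<lambda>n. a n * x n)"

definition band_op :: "nat \<Rightarrow> (int \<Rightarrow> int \<Rightarrow> complex) \<Rightarrow> (int \<Rightarrow> complex) \<Rightarrow> (int \<Rightarrow> complex)" where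
  "band_op w a x = (\<lambda>n. \<Sum>k\<in>{- int w..int w}. mult_op (a k) (shift_pow k x) n)"

definition is_band_operator :: "((int \<Rightarrow> complex) \<Rightarrow> (int \<Rightarrow> complex)) \<Rightarrow> bool" where
  "is_band_operator A \<longleftrightarrow>
     (\<exists>w a. (\<forall>k. bounded (range (a k))) \<and> (\<forall>x\<in>l2. A x = band_op w a x))"

definition lower_norm :: "((int \<Rightarrow> complex) \<Rightarrow> (int \<Rightarrow> complex)) \<Rightarrow> real" where
  "lower_norm A = Inf {l2norm (A x) | x. x \<in> l2 \<and> l2norm x = 1}"

definition lower_norm_on :: "int \<Rightarrow> int \<Rightarrow> ((int \<Rightarrow> complex) \<Rightarrow> (int \<Rightarrow> complex)) \<Rightarrow> real" where
  "lower_norm_on l r A = Inf {l2norm (A x) | x. x \<in> l2 \<and> l2norm x = 1 \<and>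
      (\<forall>n. x n \<noteq> 0 \<longrightarrow> l \<le> n \<and> n \<le> r)}"

end

theory Submission
  imports Defs
begin

lemma l2_fin:
  assumes "z \<in> l2" "finite F"
  shows "(\<Sum>n\<in>F. (cmod (z n))\<^sup>2) \<le> (l2norm z)\<^sup>2"
proof -
  have s: "(\<lambda>n. (cmod (z n))\<^sup>2) summable_on UNIV" using assms(1) by (simp add: l2_def)
  have "(\<Sum>n\<in>F. (cmod (z n))\<^sup>2) \<le> (\<Sum>\<^sub>\<infinity>n. (cmod (z n))\<^sup>2)"
    by (rule finite_sum_le_infsum[OF s assms(2)]) auto
  moreover have "0 \<le> (\<Sum>\<^sub>\<infinity>n. (cmod (z n))\<^sup>2)" by (rule infsum_nonneg) auto
  ultimately show ?thesis by (simp add: l2norm_def)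
qed

lemma L2_le:
  assumes "z \<in> l2" "finite F"
  shows "L2_set (\<lambda>n. cmod (z n)) F \<le> l2norm z"
proof -
  have "L2_set (\<lambda>n. cmod (z n)) F \<le> sqrt ((l2norm z)\<^sup>2)"
    unfolding L2_set_def using l2_fin[OF assms] real_sqrt_le_mono by blast
  also have "\<dots> = l2norm z" by (simp add: l2norm_def infsum_nonneg)
  finally show ?thesis .
qed

lemma l2_bound:
  assumes "\<And>F. finite F \<Longrightarrow> L2_set (\<lambda>n. cmod (z n)) F \<le> B"
  shows "z \<in> l2 \<and> l2norm z \<le> B"
proof -
  have B: "0 \<le> B" using assms[of "{}"] by simp
  have fs: "(\<Sum>n\<in>F. (cmod (z n))\<^sup>2) \<le> B\<^sup>2" if "finite F" for F
  proof -
    have "sqrt (\<Sum>n\<in>F. (cmod (z n))\<^sup>2) \<le> B" using assms[OF that] by (simp add: L2_set_def)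
    then show ?thesis using B by (metis real_le_rsqrt real_sqrt_le_iff sqrt_le_D)
  qed
  have s: "(\<lambda>n. (cmod (z n))\<^sup>2) summable_on UNIV"
    by (rule nonneg_bdd_above_summable_on) (auto intro!: bdd_aboveI[where M="B\<^sup>2"] fs)
  have "(\<Sum>\<^sub>\<infinity>n. (cmod (z n))\<^sup>2) \<le> B\<^sup>2"
    by (rule infsum_le_finite_sums[OF s]) (use fs in auto)
  then have "l2norm z \<le> sqrt (B\<^sup>2)" unfolding l2norm_def using real_sqrt_le_mono by blast
  with B s show ?thesis by (simp add: l2_def)
qed

lemma l2_add:
  assumes "u \<in> l2" "v \<in> l2"
  shows "(\<lambda>n. u n + v n) \<in> l2 \<and> l2norm (\<lambda>n. u n + v n) \<le> l2norm u + l2norm v"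
proof (rule l2_bound)
  fix F :: "int set" assume F: "finite F"
  have "L2_set (\<lambda>n. cmod (u n + v n)) F \<le> L2_set (\<lambda>n. cmod (u n) + cmod (v n)) F"
    by (rule L2_set_mono) (auto simp: norm_triangle_ineq)
  also have "\<dots> \<le> L2_set (\<lambda>n. cmod (u n)) F + L2_set (\<lambda>n. cmod (v n)) F"
    by (rule L2_set_triangle_ineq)
  also have "\<dots> \<le> l2norm u + l2norm v" using L2_le[OF assms(1) F] L2_le[OF assms(2) F] by simp
  finally show "L2_set (\<lambda>n. cmod (u n + v n)) F \<le> l2norm u + l2norm v" .
qed

lemma l2_neg:
  assumes "u \<in> l2"
  shows "(\<lambda>n. - u n) \<in> l2 \<and> l2norm (\<lambda>n. - u n) = l2norm u"
  using assms by (simp add: l2_def l2norm_def)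

lemma l2_scale:
  assumes "u \<in> l2"
  shows "(\<lambda>n. c * u n) \<in> l2 \<and> l2norm (\<lambda>n. c * u n) = cmod c * l2norm u"
proof -
  have s: "(\<lambda>n. (cmod (u n))\<^sup>2) summable_on UNIV" using assms by (simp add: l2_def)
  have e: "(\<lambda>n. (cmod (c * u n))\<^sup>2) = (\<lambda>n. (cmod (u n))\<^sup>2 * (cmod c)\<^sup>2)"
    by (simp add: norm_mult power_mult_distrib mult.commute)
  have "(\<lambda>n. (cmod (c * u n))\<^sup>2) summable_on UNIV" unfolding e by (rule summable_on_cmult_left[OF s])
  moreover have "(\<Sum>\<^sub>\<infinity>n. (cmod (c * u n))\<^sup>2) = (\<Sum>\<^sub>\<infinity>n. (cmod (u n))\<^sup>2) * (cmod c)\<^sup>2"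
    unfolding e by (rule infsum_cmult_left) (use s in auto)
  moreover have "0 \<le> (\<Sum>\<^sub>\<infinity>n. (cmod (u n))\<^sup>2)" by (rule infsum_nonneg) auto
  ultimately show ?thesis by (simp add: l2_def l2norm_def real_sqrt_mult)
qed

lemma L2_set_sum:
  assumes "finite K"
  shows "L2_set (\<lambda>n. \<Sum>k\<in>K. f k n) F \<le> (\<Sum>k\<in>K. L2_set (f k) F)"
  using assms
proof (induction K rule: finite_induct)
  case empty then show ?case by (simp add: L2_set_def)
next
  case (insert k K)
  have "L2_set (\<lambda>n. \<Sum>k\<in>insert k K. f k n) F = L2_set (\<lambda>n. f k n + (\<Sum>k\<in>K. f k n)) F"
    using insert by simp
  also have "\<dots> \<le> L2_set (f k) F + L2_set (\<lambda>n. \<Sum>k\<in>K. f k n) F"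
    by (rule L2_set_triangle_ineq)
  also have "\<dots> \<le> L2_set (f k) F + (\<Sum>k\<in>K. L2_set (f k) F)" using insert by simp
  finally show ?case using insert by simp
qed

lemma L2_shift:
  assumes "z \<in> l2" "finite F"
  shows "L2_set (\<lambda>n. cmod (z (n - k))) F \<le> l2norm z"
proof -
  have "inj_on (\<lambda>n::int. n - k) F" by (auto simp: inj_on_def)
  then have "L2_set (\<lambda>n. cmod (z (n - k))) F = L2_set (\<lambda>n. cmod (z n)) ((\<lambda>n. n - k) ` F)"
    unfolding L2_set_def by (simp add: sum.reindex)
  also have "\<dots> \<le> l2norm z" using L2_le[OF assms(1)] assms(2) by blast
  finally show ?thesis .
qed

lemma band_bounded:
  assumes "\<forall>k. bounded (range (a k))"
  shows "\<exists>C\<ge>0. \<forall>z\<in>l2. band_op w a z \<in> l2 \<and> l2norm (band_op w a z) \<le> C * l2norm z"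
proof -
  let ?K = "{- int w..int w}"
  have "bounded (\<Union>k\<in>?K. range (a k))" using assms by (intro bounded_UN) auto
  then obtain M0 where M0: "\<And>k n. k \<in> ?K \<Longrightarrow> cmod (a k n) \<le> M0"
    unfolding bounded_iff by blast
  define M where "M = max M0 0"
  have M: "\<And>k n. k \<in> ?K \<Longrightarrow> cmod (a k n) \<le> M" "M \<ge> 0" using M0 unfolding M_def by (meson max.coboundedI1, simp)
  show ?thesis
  proof (intro exI[of _ "real (card ?K) * M"] conjI ballI)
    show "0 \<le> real (card ?K) * M" using M by simp
    fix z assume z: "z \<in> l2"
    have "L2_set (\<lambda>n. cmod (band_op w a z n)) F \<le> real (card ?K) * M * l2norm z" if F: "finite F" for F
    proof -
      have pt: "cmod (band_op w a z n) \<le> (\<Sum>k\<in>?K. M * cmod (z (n - k)))" for n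
      proof -
        have "cmod (band_op w a z n) \<le> (\<Sum>k\<in>?K. cmod (a k n * z (n - k)))"
          unfolding band_op_def mult_op_def shift_pow_def by (rule norm_sum)
        also have "\<dots> \<le> (\<Sum>k\<in>?K. M * cmod (z (n - k)))"
          by (rule sum_mono) (auto simp: norm_mult intro!: mult_right_mono M)
        finally show ?thesis .
      qed
      have "L2_set (\<lambda>n. cmod (band_op w a z n)) F \<le> L2_set (\<lambda>n. \<Sum>k\<in>?K. M * cmod (z (n - k))) F"
        by (rule L2_set_mono) (use pt in auto)
      also have "\<dots> \<le> (\<Sum>k\<in>?K. L2_set (\<lambda>n. M * cmod (z (n - k))) F)"
        by (rule L2_set_sum) simp
      also have "\<dots> = (\<Sum>k\<in>?K. M * L2_set (\<lambda>n. cmod (z (n - k))) F)"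
        using M(2) by (simp add: L2_set_right_distrib)
      also have "\<dots> \<le> (\<Sum>k\<in>?K. M * l2norm z)"
        by (rule sum_mono) (use M(2) L2_shift[OF z F] in \<open>auto intro: mult_left_mono\<close>)
      also have "\<dots> = real (card ?K) * M * l2norm z" by simp
      finally show ?thesis .
    qed
    then have h: "band_op w a z \<in> l2 \<and> l2norm (band_op w a z) \<le> real (card ?K) * M * l2norm z"
      by (rule l2_bound)
    then show "band_op w a z \<in> l2" by simp
    show "l2norm (band_op w a z) \<le> real (card ?K) * M * l2norm z" using h by simp
  qed
qed

lemma band_diff: "band_op w a (\<lambda>n. x n - y n) = (\<lambda>n. band_op w a x n - band_op w a y n)"
  unfolding band_op_def mult_op_def shift_pow_def by (simp add: algebra_simps sum_subtractf)

lemma band_scale: "band_op w a (\<lambda>n. c * x n) = (\<lambda>n. c * band_op w a x n)"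
  unfolding band_op_def mult_op_def shift_pow_def by (simp add: algebra_simps sum_distrib_left)

lemma l2norm_nonneg: "0 \<le> l2norm z"
  unfolding l2norm_def by (simp add: infsum_nonneg)

lemma l2_tail:
  assumes x: "x \<in> l2" and d: "\<delta> > 0"
  shows "\<exists>N::nat. (\<lambda>n. x n - (if - int N \<le> n \<and> n \<le> int N then x n else 0)) \<in> l2 \<and>
           l2norm (\<lambda>n. x n - (if - int N \<le> n \<and> n \<le> int N then x n else 0)) \<le> \<delta>"
proof -
  define f where "f = (\<lambda>n. (cmod (x n))\<^sup>2)"
  have s: "f summable_on UNIV" using x by (simp add: l2_def f_def)
  define S where "S = infsum f UNIV"
  have lim: "(sum f \<longlongrightarrow> S) (finite_subsets_at_top UNIV)"
    using has_sum_infsum[OF s] by (simp add: has_sum_def S_def)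
  have dd: "0 < \<delta>\<^sup>2" using d by simp
  have "eventually (\<lambda>F. dist (sum f F) S < \<delta>\<^sup>2) (finite_subsets_at_top UNIV)"
    by (rule tendstoD[OF lim dd])
  then obtain X where X: "finite X" "\<And>Y. finite Y \<Longrightarrow> X \<subseteq> Y \<Longrightarrow> dist (sum f Y) S < \<delta>\<^sup>2"
    using eventually_finite_subsets_at_top[THEN iffD1] by force
  define N where "N = nat (Max (insert 0 (abs ` X)))"
  define I where "I = {- int N..int N}"
  have XI: "X \<subseteq> I"
  proof
    fix n assume "n \<in> X"
    then have "abs n \<le> Max (insert 0 (abs ` X))" using X(1) by (intro Max_ge) auto
    then show "n \<in> I" unfolding I_def N_def by auto
  qed
  have fI: "finite I" unfolding I_def by simp
  have SI: "S - \<delta>\<^sup>2 < sum f I" using X(2)[OF fI XI] by (simp add: dist_real_def)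
  let ?d = "\<lambda>n. x n - (if - int N \<le> n \<and> n \<le> int N then x n else 0)"
  have "?d \<in> l2 \<and> l2norm ?d \<le> \<delta>"
  proof (rule l2_bound)
    fix G :: "int set" assume G: "finite G"
    have g: "(\<lambda>n. (cmod (?d n))\<^sup>2) = (\<lambda>n. if n \<in> I then 0 else f n)"
      by (rule ext) (simp add: I_def f_def)
    have "(\<Sum>n\<in>G. (cmod (?d n))\<^sup>2) \<le> (\<Sum>n\<in>G \<union> I. (if n \<in> I then 0 else f n))"
      unfolding g by (rule sum_mono2) (use G fI in \<open>auto simp: f_def\<close>)
    also have "\<dots> = sum f (G \<union> I) - sum f I"
    proof -
      have "sum f (G \<union> I) = (\<Sum>n\<in>G \<union> I. (if n \<in> I then 0 else f n)) + (\<Sum>n\<in>G \<union> I. (if n \<in> I then f n else 0))"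
        unfolding sum.distrib[symmetric] by (rule sum.cong) auto
      moreover have "(\<Sum>n\<in>G \<union> I. (if n \<in> I then f n else 0)) = sum f I"
        using G fI by (simp add: sum.If_cases Int_absorb1)
      ultimately show ?thesis by simp
    qed
    also have "\<dots> \<le> S - sum f I"
      using finite_sum_le_infsum[OF s, of "G \<union> I"] G fI by (auto simp: S_def f_def)
    also have "\<dots> < \<delta>\<^sup>2" using SI by simp
    finally have "(\<Sum>n\<in>G. (cmod (?d n))\<^sup>2) \<le> \<delta>\<^sup>2" by simp
    then show "L2_set (\<lambda>n. cmod (?d n)) G \<le> \<delta>"
      unfolding L2_set_def using d by (simp add: real_sqrt_le_iff real_le_lsqrt)
  qed
  then show ?thesis by blast
qed

theorem corollary3p2:
  fixes A :: "(int \<Rightarrow> complex) \<Rightarrow> (int \<Rightarrow> complex)" and \<epsilon> :: real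
  assumes "is_band_operator A" and "\<epsilon> > 0"
  shows "\<exists>l r. l \<le> r \<and> lower_norm A \<le> lower_norm_on l r A \<and>
                lower_norm_on l r A < lower_norm A + \<epsilon>"
proof -
  obtain w a where ab: "\<forall>k. bounded (range (a k))" and Aeq: "\<And>x. x \<in> l2 \<Longrightarrow> A x = band_op w a x"
    using assms(1) unfolding is_band_operator_def by blast
  obtain C where C0: "C \<ge> 0" and C: "\<And>z. z \<in> l2 \<Longrightarrow> band_op w a z \<in> l2 \<and> l2norm (band_op w a z) \<le> C * l2norm z"
    using band_bounded[OF ab, of w] by blast
  define SS where "SS = {l2norm (A x) | x. x \<in> l2 \<and> l2norm x = 1}"
  define \<nu> where "\<nu> = Inf SS"
  have bddS: "bdd_below SS" unfolding SS_def by (rule bdd_belowI[where m=0]) (auto simp: l2norm_nonneg)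
  define e0 :: "int \<Rightarrow> complex" where "e0 = (\<lambda>n. if n = 0 then 1 else 0)"
  have e0a: "e0 \<in> l2 \<and> l2norm e0 \<le> 1"
  proof (rule l2_bound)
    fix F :: "int set" assume F: "finite F"
    have "(\<Sum>n\<in>F. (cmod (e0 n))\<^sup>2) \<le> 1"
    proof -
      have "(\<Sum>n\<in>F. (cmod (e0 n))\<^sup>2) = (\<Sum>n\<in>F. if n = 0 then (1::real) else 0)"
        by (rule sum.cong) (auto simp: e0_def)
      also have "\<dots> = (if 0 \<in> F then 1 else 0)" using F by (simp add: sum.delta)
      finally show ?thesis by simp
    qed
    then show "L2_set (\<lambda>n. cmod (e0 n)) F \<le> 1" unfolding L2_set_def by simp
  qed
  have "L2_set (\<lambda>n. cmod (e0 n)) {0} \<le> l2norm e0" using L2_le[of e0 "{0}"] e0a by simp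
  then have "l2norm e0 = 1" using e0a by (simp add: e0_def L2_set_def)
  then have SSne: "SS \<noteq> {}" unfolding SS_def using e0a by blast
  have nu0: "0 \<le> \<nu>" unfolding \<nu>_def
    by (rule cInf_greatest[OF SSne]) (auto simp: SS_def l2norm_nonneg)
  have "\<nu> < \<nu> + \<epsilon>/2" using assms(2) by simp
  then obtain t where "t \<in> SS" "t < \<nu> + \<epsilon>/2" unfolding \<nu>_def using cInf_lessD[OF SSne] by blast
  then obtain x where x: "x \<in> l2" "l2norm x = 1" and t: "t = l2norm (A x)" "t < \<nu> + \<epsilon>/2"
    unfolding SS_def by blast
  have t0: "0 \<le> t" using t by (simp add: l2norm_nonneg)
  define \<delta> where "\<delta> = min (1/2) ((\<nu> + \<epsilon> - t) / (2 * (C + \<nu> + \<epsilon>)))"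
  have pos: "\<nu> + \<epsilon> - t > 0" "C + \<nu> + \<epsilon> > 0" using t(2) assms(2) C0 nu0 by auto
  have dpos: "\<delta> > 0" unfolding \<delta>_def using pos by auto
  have dhalf: "\<delta> \<le> 1/2" unfolding \<delta>_def by (rule min.cobounded1)
  have dkey: "\<delta> * (C + \<nu> + \<epsilon>) \<le> (\<nu> + \<epsilon> - t) / 2"
  proof -
    have "\<delta> \<le> (\<nu> + \<epsilon> - t) / (2 * (C + \<nu> + \<epsilon>))" unfolding \<delta>_def by simp
    then have "\<delta> * (C + \<nu> + \<epsilon>) \<le> (\<nu> + \<epsilon> - t) / (2 * (C + \<nu> + \<epsilon>)) * (C + \<nu> + \<epsilon>)"
      using pos by (intro mult_right_mono) auto
    also have "\<dots> = (\<nu> + \<epsilon> - t) / 2" using pos by (simp add: field_simps)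
    finally show ?thesis .
  qed
  obtain N :: nat where dN: "(\<lambda>n. x n - (if - int N \<le> n \<and> n \<le> int N then x n else 0)) \<in> l2"
      "l2norm (\<lambda>n. x n - (if - int N \<le> n \<and> n \<le> int N then x n else 0)) \<le> \<delta>"
    using l2_tail[OF x(1) dpos] by blast
  define y where "y = (\<lambda>n. if - int N \<le> n \<and> n \<le> int N then x n else 0)"
  define d where "d = (\<lambda>n. x n - y n)"
  have d: "d \<in> l2" "l2norm d \<le> \<delta>" using dN unfolding d_def y_def by auto
  have y: "y \<in> l2"
  proof -
    have "(\<lambda>n. x n + - d n) \<in> l2" using l2_add[OF x(1) l2_neg[OF d(1), THEN conjunct1]] by blast
    moreover have "(\<lambda>n. x n + - d n) = y" by (simp add: d_def)
    ultimately show ?thesis by simp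
  qed
  have "l2norm (\<lambda>n. y n + d n) \<le> l2norm y + l2norm d" using l2_add[OF y d(1)] by blast
  moreover have "(\<lambda>n. y n + d n) = x" by (simp add: d_def)
  ultimately have ny: "l2norm y \<ge> 1 - \<delta>" using x(2) d(2) by simp
  have nypos: "l2norm y > 0" using ny dhalf by simp
  have bd: "band_op w a d \<in> l2" "l2norm (band_op w a d) \<le> C * \<delta>"
  proof -
    show "band_op w a d \<in> l2" using C[OF d(1)] by blast
    have "l2norm (band_op w a d) \<le> C * l2norm d" using C[OF d(1)] by blast
    also have "\<dots> \<le> C * \<delta>" using d(2) C0 by (intro mult_left_mono) auto
    finally show "l2norm (band_op w a d) \<le> C * \<delta>" .
  qed
  have bx: "band_op w a x \<in> l2" "l2norm (band_op w a x) = t" using C[OF x(1)] t Aeq[OF x(1)] by auto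
  have "band_op w a y = band_op w a (\<lambda>n. x n - d n)" by (simp add: d_def)
  also have "\<dots> = (\<lambda>n. band_op w a x n + - band_op w a d n)" by (simp add: band_diff)
  finally have byeq: "band_op w a y = (\<lambda>n. band_op w a x n + - band_op w a d n)" .
  have by_le: "l2norm (band_op w a y) \<le> t + C * \<delta>"
    using l2_add[OF bx(1) l2_neg[OF bd(1), THEN conjunct1]] l2_neg[OF bd(1)] bd(2) bx(2)
    unfolding byeq by simp
  define c :: complex where "c = complex_of_real (1 / l2norm y)"
  define u where "u = (\<lambda>n. c * y n)"
  have cc: "cmod c = 1 / l2norm y" unfolding c_def using nypos by (simp add: norm_divide)
  have u: "u \<in> l2" "l2norm u = 1" using l2_scale[OF y, of c] cc nypos unfolding u_def by auto
  have Au: "A u = (\<lambda>n. c * band_op w a y n)" using Aeq[OF u(1)] by (simp add: u_def band_scale)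
  have nAu: "l2norm (A u) = l2norm (band_op w a y) / l2norm y"
    using l2_scale[OF C[OF y, THEN conjunct1], of c] cc unfolding Au by simp
  have "l2norm (A u) \<le> (t + C * \<delta>) / (1 - \<delta>)"
  proof -
    have "l2norm (band_op w a y) / l2norm y \<le> (t + C * \<delta>) / l2norm y"
      using by_le nypos by (simp add: divide_right_mono)
    also have "\<dots> \<le> (t + C * \<delta>) / (1 - \<delta>)"
      using ny dhalf t0 C0 dpos by (intro divide_left_mono) auto
    finally show ?thesis using nAu by simp
  qed
  also have "\<dots> < \<nu> + \<epsilon>"
  proof -
    have "t + C * \<delta> < (\<nu> + \<epsilon>) * (1 - \<delta>)" using dkey pos by (simp add: algebra_simps)
    then show ?thesis using dhalf by (simp add: field_simps)
  qed
  finally have Ault: "l2norm (A u) < \<nu> + \<epsilon>" .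
  define TT where "TT = {l2norm (A x) | x. x \<in> l2 \<and> l2norm x = 1 \<and>
      (\<forall>n. x n \<noteq> 0 \<longrightarrow> - int N \<le> n \<and> n \<le> int N)}"
  have usupp: "\<forall>n. u n \<noteq> 0 \<longrightarrow> - int N \<le> n \<and> n \<le> int N" by (simp add: u_def y_def)
  have uT: "l2norm (A u) \<in> TT" unfolding TT_def using u usupp by blast
  have TS: "TT \<subseteq> SS" unfolding TT_def SS_def by blast
  have bddT: "bdd_below TT" unfolding TT_def by (rule bdd_belowI[where m=0]) (auto simp: l2norm_nonneg)
  have LT: "lower_norm_on (- int N) (int N) A = Inf TT" by (simp add: lower_norm_on_def TT_def)
  have LS: "lower_norm A = \<nu>" by (simp add: lower_norm_def \<nu>_def SS_def)
  have "\<nu> \<le> Inf TT" unfolding \<nu>_def using uT TS bddS by (intro cInf_superset_mono) auto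
  moreover have "Inf TT \<le> l2norm (A u)" by (rule cInf_lower[OF uT bddT])
  ultimately show ?thesis using Ault LT LS by (intro exI[of _ "- int N"] exI[of _ "int N"]) auto
qed

end
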